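(* Every RAD-AG-groupoid $S$ is right distributive, i.e. $(ab)c=(ac)(bc)$ for all $a,b,c\in S$.
   Context: A groupoid is a set $S$ with a binary operation written as juxtaposition; $ab\cdot c$ means $(ab)c$. An AG-groupoid is a groupoid satisfying the left invertive law $(ab)c=(cb)a$ for all $a,b,c\in S$. An RAD-AG-groupoid (right abelian distributive AG-groupoid) is an AG-groupoid satisfying $(ab)c=(ca)(bc)$ for all $a,b,c\in S$. *)

theory Defs
  imports Main
begin

definition AG_groupoid :: "('a \<Rightarrow> 'a \<Rightarrow> 'a) \<Rightarrow> bool" where
  "AG_groupoid m \<longleftrightarrow> (\<forall>a b c. m (m a b) c = m (m c b) a)"

definition RAD_AG_groupoid :: "('a \<Rightarrow> 'a \<Rightarrow> 'a) \<Rightarrow> bool" where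
  "RAD_AG_groupoid m \<longleftrightarrow> AG_groupoid m \<and> (\<forall>a b c. m (m a b) c = m (m c a) (m b c))"

definition right_distributive :: "('a \<Rightarrow> 'a \<Rightarrow> 'a) \<Rightarrow> bool" where
  "right_distributive m \<longleftrightarrow> (\<forall>a b c. m (m a b) c = m (m a c) (m b c))"

end

theory Submission
  imports Defs
begin

theorem mainTheorem6:
  fixes m :: "'a \<Rightarrow> 'a \<Rightarrow> 'a"
  assumes "RAD_AG_groupoid m"
  shows "right_distributive m"
proof -
  have L: "\<And>a b c. m (m a b) c = m (m c b) a" and R: "\<And>a b c. m (m a b) c = m (m c a) (m b c)"
    using assms unfolding RAD_AG_groupoid_def AG_groupoid_def by auto
  have M: "\<And>a b c d. m (m a b) (m c d) = m (m a c) (m b d)"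
    by (metis L)
  show ?thesis unfolding right_distributive_def
    using M R by metis
qed

end
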